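(* Let $X$ be a compact subset of a real normed vector space $(V,\|\cdot\|)$. For all $u,v\in\Delta(X)$, $d_1(u,v)=d_2(u,v)=d_2^+(u,v)$.
   Context: $E=\mathcal C(X)$ is the space of continuous real functions on $X$. $\Delta(X)$ is the set of Borel probability measures on $X$, with $u(f)=\int f\,du$. - $D_1=\{f\in E:\ \forall x,y\in X,\ \forall a,b\ge 0,\ af(x)-bf(y)\le\|ax-by\|\}$, and $d_1(u,v)=\sup_{f\in D_1}\big(u(f)-v(f)\big)$. - $D_2=\{(f,g)\in E\times E:\ \forall x,y\in X,\ \forall a,b\ge0,\ af(x)+bg(y)\le\|ax-by\|\}$, and $d_2(u,v)=\sup_{(f,g)\in D_2}\big(u(f)+v(g)\big)$. - For $\varepsilon>0$, $D_2^\varepsilon=\{(f,g)\in E\times E:\ \forall x,y\in X,\ \forall a,b\in[0,1],\ af(x)+bg(y)\le\varepsilon+\|ax-by\|\}$ and $d_2^\varepsilon(u,v)=\sup_{(f,g)\in D_2^\varepsilon}\big(u(f)+v(g)\big)$. Then $d_2^+(u,v)=\inf_{\varepsilon>0}d_2^\varepsilon(u,v)$. *)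

theory Defs
  imports "HOL-Probability.Probability"
begin

definition Delta :: "'v::real_normed_vector set \<Rightarrow> 'v measure set" where
  "Delta X = {u. prob_space u \<and> sets u = sets (restrict_space borel X)}"

definition D1 :: "'v::real_normed_vector set \<Rightarrow> ('v \<Rightarrow> real) set" where
  "D1 X = {f. continuous_on X f \<and>
     (\<forall>x\<in>X. \<forall>y\<in>X. \<forall>a::real. \<forall>b::real. a \<ge> 0 \<longrightarrow> b \<ge> 0 \<longrightarrow>
        a * f x - b * f y \<le> norm (a *\<^sub>R x - b *\<^sub>R y))}"

definition d1 :: "'v::real_normed_vector set \<Rightarrow> 'v measure \<Rightarrow> 'v measure \<Rightarrow> real" where
  "d1 X u v = (SUP f\<in>D1 X. integral\<^sup>L u f - integral\<^sup>L v f)"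

definition D2 :: "'v::real_normed_vector set \<Rightarrow> (('v \<Rightarrow> real) \<times> ('v \<Rightarrow> real)) set" where
  "D2 X = {(f, g). continuous_on X f \<and> continuous_on X g \<and>
     (\<forall>x\<in>X. \<forall>y\<in>X. \<forall>a::real. \<forall>b::real. a \<ge> 0 \<longrightarrow> b \<ge> 0 \<longrightarrow>
        a * f x + b * g y \<le> norm (a *\<^sub>R x - b *\<^sub>R y))}"

definition d2 :: "'v::real_normed_vector set \<Rightarrow> 'v measure \<Rightarrow> 'v measure \<Rightarrow> real" where
  "d2 X u v = (SUP fg\<in>D2 X. integral\<^sup>L u (fst fg) + integral\<^sup>L v (snd fg))"

definition D2eps :: "'v::real_normed_vector set \<Rightarrow> real \<Rightarrow> (('v \<Rightarrow> real) \<times> ('v \<Rightarrow> real)) set" where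
  "D2eps X \<epsilon> = {(f, g). continuous_on X f \<and> continuous_on X g \<and>
     (\<forall>x\<in>X. \<forall>y\<in>X. \<forall>a\<in>{0..1::real}. \<forall>b\<in>{0..1::real}.
        a * f x + b * g y \<le> \<epsilon> + norm (a *\<^sub>R x - b *\<^sub>R y))}"

definition d2eps :: "'v::real_normed_vector set \<Rightarrow> real \<Rightarrow> 'v measure \<Rightarrow> 'v measure \<Rightarrow> real" where
  "d2eps X \<epsilon> u v = (SUP fg\<in>D2eps X \<epsilon>. integral\<^sup>L u (fst fg) + integral\<^sup>L v (snd fg))"

definition d2plus :: "'v::real_normed_vector set \<Rightarrow> 'v measure \<Rightarrow> 'v measure \<Rightarrow> real" where
  "d2plus X u v = (INF \<epsilon>\<in>{0<..}. d2eps X \<epsilon> u v)"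

end

theory Submission
  imports Defs
begin

lemma space_Delta: "u \<in> Delta X \<Longrightarrow> space u = X"
  unfolding Delta_def by (auto dest!: sets_eq_imp_space_eq simp: space_restrict_space)

lemma integ_Delta:
  fixes f :: "'v::real_normed_vector \<Rightarrow> real"
  assumes "compact X" "u \<in> Delta X" "continuous_on X f"
  shows "integrable u f"
proof -
  have ps: "prob_space u" and se: "sets u = sets (restrict_space borel X)"
    using assms(2) unfolding Delta_def by auto
  have sp: "space u = X" using space_Delta[OF assms(2)] .
  have m: "f \<in> borel_measurable u"
    using borel_measurable_continuous_on_restrict[OF assms(3)]
    by (simp add: measurable_cong_sets[OF se refl])
  have "compact (f ` X)" using compact_continuous_image[OF assms(3,1)] .
  then obtain B where B: "\<forall>y\<in>f ` X. norm y \<le> B"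
    using compact_imp_bounded bounded_iff by blast
  interpret prob_space u by fact
  have "AE x in u. norm (f x) \<le> B" using B sp by (intro AE_I2) auto
  then show ?thesis using m by (rule integrable_const_bound)
qed

lemma D2_D2eps: "e \<ge> 0 \<Longrightarrow> D2 X \<subseteq> D2eps X e"
  unfolding D2_def D2eps_def
  by (auto) (smt (verit, best))

lemma D2eps_bound:
  assumes "compact X" "u \<in> Delta X" "v \<in> Delta X" and M: "\<forall>x\<in>X. norm x \<le> M"
    and fg: "fg \<in> D2eps X e"
  shows "integral\<^sup>L u (fst fg) + integral\<^sup>L v (snd fg) \<le> 2 * (M + e)"
proof -
  obtain f g where fgd: "fg = (f, g)" by (cases fg)
  have cf: "continuous_on X f" and cg: "continuous_on X g"
    and c: "\<And>x y a b. x\<in>X \<Longrightarrow> y\<in>X \<Longrightarrow> a\<in>{0..1} \<Longrightarrow> b\<in>{0..1} \<Longrightarrow>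
        a * f x + b * g y \<le> e + norm (a *\<^sub>R x - b *\<^sub>R y)"
    using fg unfolding fgd D2eps_def by auto
  have f: "f x \<le> M + e" if "x \<in> X" for x
    using c[OF that that, of 1 0] M that by auto
  have g: "g x \<le> M + e" if "x \<in> X" for x
    using c[OF that that, of 0 1] M that by auto
  interpret U: prob_space u using assms(2) unfolding Delta_def by auto
  interpret V: prob_space v using assms(3) unfolding Delta_def by auto
  have "integral\<^sup>L u f \<le> integral\<^sup>L u (\<lambda>_. M + e)"
    by (rule integral_mono) (use integ_Delta[OF assms(1,2) cf] space_Delta[OF assms(2)] f in auto)
  moreover have "integral\<^sup>L v g \<le> integral\<^sup>L v (\<lambda>_. M + e)"
    by (rule integral_mono) (use integ_Delta[OF assms(1,3) cg] space_Delta[OF assms(3)] g in auto)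
  ultimately show ?thesis unfolding fgd by (simp add: U.prob_space V.prob_space)
qed

definition Fh :: "'v::real_normed_vector set \<Rightarrow> ('v \<Rightarrow> real) \<Rightarrow> 'v \<Rightarrow> real" where
  "Fh X f p = Sup {a * f x' - norm (a *\<^sub>R x' - p) | a x'. a \<ge> 0 \<and> x' \<in> X}"

lemma Fh_props:
  assumes fg: "(f, g) \<in> D2 X"
  shows "Fh X f \<in> D1 X" "\<And>x. x \<in> X \<Longrightarrow> f x \<le> Fh X f x" "\<And>x. x \<in> X \<Longrightarrow> Fh X f x \<le> - g x"
proof -
  have c: "\<And>x y a b. x\<in>X \<Longrightarrow> y\<in>X \<Longrightarrow> a \<ge> 0 \<Longrightarrow> b \<ge> 0 \<Longrightarrow>
        a * f x + b * g y \<le> norm (a *\<^sub>R x - b *\<^sub>R y)"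
    using fg unfolding D2_def by auto
  define S where "S y = {a * f x' - norm (a *\<^sub>R x' - y) | a x'. a \<ge> 0 \<and> x' \<in> X}" for y
  have F: "Fh X f y = Sup (S y)" for y unfolding Fh_def S_def by simp
  have ne: "S y \<noteq> {}" if "y \<in> X" for y unfolding S_def using that by blast
  have ub: "z \<le> - g y" if "y \<in> X" "z \<in> S y" for y z
    using that c[of _ y _ 1] unfolding S_def by force
  have bdd: "bdd_above (S y)" if "y \<in> X" for y unfolding bdd_above_def using ub[OF that] by blast
  have mem: "a * f x' - norm (a *\<^sub>R x' - y) \<le> Fh X f y" if "y \<in> X" "a \<ge> 0" "x' \<in> X" for a x' y
    unfolding F by (rule cSup_upper[OF _ bdd[OF that(1)]]) (use that in \<open>auto simp: S_def\<close>)
  show le1: "f x \<le> Fh X f x" if "x \<in> X" for x using mem[OF that _ that, of 1] by simp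
  show le2: "Fh X f x \<le> - g x" if "x \<in> X" for x
    unfolding F by (rule cSup_least[OF ne[OF that]]) (use ub that in auto)
  have lb: "- norm y \<le> Fh X f y" if "y \<in> X" for y using mem[OF that _ that, of 0] by simp
  have fle: "f x \<le> norm x" if "x \<in> X" for x using c[OF that that, of 1 0] by simp
  have key: "a * Fh X f x - b * Fh X f y \<le> norm (a *\<^sub>R x - b *\<^sub>R y)"
    if xy: "x \<in> X" "y \<in> X" and ab: "a \<ge> 0" "b \<ge> 0" for x y a b
  proof (cases "a = 0")
    case True
    have "b * (- norm y) \<le> b * Fh X f y" using lb[OF xy(2)] ab(2) by (rule mult_left_mono)
    then show ?thesis using True ab by simp
  next
    case False
    hence apos: "a > 0" using ab by simp
    let ?K = "b * Fh X f y + norm (a *\<^sub>R x - b *\<^sub>R y)"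
    have "Fh X f x \<le> ?K / a"
      unfolding F[of x]
    proof (rule cSup_least[OF ne[OF xy(1)]])
      fix z assume "z \<in> S x"
      then obtain c x' where z: "z = c * f x' - norm (c *\<^sub>R x' - x)" "c \<ge> 0" "x' \<in> X"
        unfolding S_def by blast
      have tri: "norm ((a*c) *\<^sub>R x' - b *\<^sub>R y) \<le> norm ((a*c) *\<^sub>R x' - a *\<^sub>R x) + norm (a *\<^sub>R x - b *\<^sub>R y)"
        by (metis add.commute diff_add_cancel norm_triangle_ineq order_refl add_diff_eq norm_triangle_sub)
      have sc: "norm ((a*c) *\<^sub>R x' - a *\<^sub>R x) = a * norm (c *\<^sub>R x' - x)"
        using apos by (metis abs_of_pos norm_scaleR scaleR_right_diff_distrib scaleR_scaleR)
      have st: "(a*c) * f x' - norm ((a*c) *\<^sub>R x' - b *\<^sub>R y) \<le> b * Fh X f y"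
      proof (cases "b = 0")
        case True
        have "(a*c) * f x' \<le> (a*c) * norm x'"
          using fle[OF z(3)] apos z(2) by (simp add: mult_left_mono)
        then show ?thesis using True apos z(2) by (simp add: abs_mult)
      next
        case False
        hence bpos: "b > 0" using ab by simp
        have "(a*c/b) * f x' - norm ((a*c/b) *\<^sub>R x' - y) \<le> Fh X f y"
          by (rule mem[OF xy(2) _ z(3)]) (use apos bpos z(2) in simp)
        hence "b * ((a*c/b) * f x' - norm ((a*c/b) *\<^sub>R x' - y)) \<le> b * Fh X f y"
          using bpos by (simp add: mult_left_mono)
        moreover have "b * norm ((a*c/b) *\<^sub>R x' - y) = norm ((a*c) *\<^sub>R x' - b *\<^sub>R y)"
        proof -
          have "b * norm ((a*c/b) *\<^sub>R x' - y) = norm (b *\<^sub>R ((a*c/b) *\<^sub>R x' - y))"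
            using bpos by simp
          also have "b *\<^sub>R ((a*c/b) *\<^sub>R x' - y) = (a*c) *\<^sub>R x' - b *\<^sub>R y"
            using bpos by (simp add: scaleR_right_diff_distrib)
          finally show ?thesis .
        qed
        ultimately show ?thesis using bpos by (simp add: algebra_simps)
      qed
      have az: "a * z = (a*c) * f x' - a * norm (c *\<^sub>R x' - x)" unfolding z(1) by (simp add: algebra_simps)
      have "a * z \<le> ?K" using st tri sc unfolding az by linarith
      then show "z \<le> ?K / a" using apos by (simp add: field_simps)
    qed
    then show ?thesis using apos by (simp add: field_simps)
  qed
  have lip: "\<bar>Fh X f x - Fh X f y\<bar> \<le> norm (x - y)" if "x \<in> X" "y \<in> X" for x y
    using key[OF that, of 1 1] key[OF that(2,1), of 1 1] by (simp add: abs_le_iff norm_minus_commute)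
  have "continuous_on X (Fh X f)"
    unfolding continuous_on_iff
  proof (intro ballI allI impI)
    fix x e assume "x \<in> X" "(0::real) < e"
    then show "\<exists>d>0. \<forall>x'\<in>X. dist x' x < d \<longrightarrow> dist (Fh X f x') (Fh X f x) < e"
      using lip by (intro exI[of _ e]) (auto simp: dist_real_def dist_norm intro: le_less_trans)
  qed
  then show "Fh X f \<in> D1 X" unfolding D1_def using key by auto
qed


lemma D2eps_shift:
  assumes fg: "(f, g) \<in> D2eps X e" and e: "e \<ge> 0"
  shows "((\<lambda>x. f x - e), (\<lambda>x. g x - e)) \<in> D2 X"
proof -
  have cf: "continuous_on X f" and cg: "continuous_on X g"
    and c: "\<And>x y a b. x\<in>X \<Longrightarrow> y\<in>X \<Longrightarrow> a\<in>{0..1} \<Longrightarrow> b\<in>{0..1} \<Longrightarrow>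
        a * f x + b * g y \<le> e + norm (a *\<^sub>R x - b *\<^sub>R y)"
    using fg unfolding D2eps_def by auto
  have key: "a * (f x - e) + b * (g y - e) \<le> norm (a *\<^sub>R x - b *\<^sub>R y)"
    if xy: "x \<in> X" "y \<in> X" and ab: "a \<ge> 0" "b \<ge> 0" for x y a b
  proof (cases "a = 0 \<and> b = 0")
    case True then show ?thesis by simp
  next
    case False
    define s where "s = max a b"
    have spos: "s > 0" using False ab unfolding s_def by auto
    have a1: "a / s \<in> {0..1}" and b1: "b / s \<in> {0..1}"
      using ab spos unfolding s_def by (auto simp: field_simps)
    have h: "(a/s) * f x + (b/s) * g y \<le> e + norm ((a/s) *\<^sub>R x - (b/s) *\<^sub>R y)"
      using c[OF xy a1 b1] .
    have "s * ((a/s) * f x + (b/s) * g y) \<le> s * (e + norm ((a/s) *\<^sub>R x - (b/s) *\<^sub>R y))"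
      using h spos by (simp add: mult_left_mono)
    moreover have "s * ((a/s) * f x + (b/s) * g y) = a * f x + b * g y"
      using spos by (simp add: field_simps)
    moreover have "s * norm ((a/s) *\<^sub>R x - (b/s) *\<^sub>R y) = norm (a *\<^sub>R x - b *\<^sub>R y)"
    proof -
      have "s * norm ((a/s) *\<^sub>R x - (b/s) *\<^sub>R y) = norm (s *\<^sub>R ((a/s) *\<^sub>R x - (b/s) *\<^sub>R y))"
        using spos by simp
      also have "s *\<^sub>R ((a/s) *\<^sub>R x - (b/s) *\<^sub>R y) = a *\<^sub>R x - b *\<^sub>R y"
        using spos by (simp add: scaleR_right_diff_distrib)
      finally show ?thesis .
    qed
    moreover have "s * e \<le> (a + b) * e"
      using e ab unfolding s_def by (intro mult_right_mono) auto
    ultimately show ?thesis by (simp add: algebra_simps)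
  qed
  show ?thesis unfolding D2_def using key cf cg
    by (auto intro!: continuous_intros)
qed

theorem proposition1:
  fixes X :: "'v::real_normed_vector set" and u v :: "'v measure"
  assumes "compact X" and "u \<in> Delta X" and "v \<in> Delta X"
  shows "d1 X u v = d2 X u v \<and> d2 X u v = d2plus X u v"
proof -
  note cX = assms(1) and uD = assms(2) and vD = assms(3)
  interpret U: prob_space u using uD unfolding Delta_def by auto
  interpret V: prob_space v using vD unfolding Delta_def by auto
  obtain M where M: "\<forall>x\<in>X. norm x \<le> M"
    using compact_imp_bounded[OF cX] bounded_iff by blast
  define I2 where "I2 fg = integral\<^sup>L u (fst fg) + integral\<^sup>L v (snd fg)" for fg :: "('v \<Rightarrow> real) \<times> ('v \<Rightarrow> real)"
  define I1 where "I1 f = integral\<^sup>L u f - integral\<^sup>L v f" for f :: "'v \<Rightarrow> real"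
  have bnd: "I2 fg \<le> 2 * (M + e)" if "fg \<in> D2eps X e" for fg e
    unfolding I2_def using D2eps_bound[OF cX uD vD M that] .
  have bdd2e: "bdd_above (I2 ` D2eps X e)" for e
    unfolding bdd_above_def using bnd[of _ e] by blast
  have bdd2: "bdd_above (I2 ` D2 X)"
  proof -
    have "\<forall>z\<in>I2 ` D2 X. z \<le> 2 * (M + 0)"
      using bnd[of _ 0] D2_D2eps[of 0 X] by auto
    then show ?thesis unfolding bdd_above_def by blast
  qed
  have D1_D2: "(f, \<lambda>x. - f x) \<in> D2 X" if "f \<in> D1 X" for f
    using that unfolding D1_def D2_def by (auto intro!: continuous_intros)
  have I12: "I1 f = I2 (f, \<lambda>x. - f x)" if "f \<in> D1 X" for f
    using that unfolding I1_def I2_def by simp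
  have bdd1: "bdd_above (I1 ` D1 X)"
    using bdd2 D1_D2 I12 by (auto simp: bdd_above_def)
  have ne1: "D1 X \<noteq> {}"
  proof -
    have "(\<lambda>_. 0) \<in> D1 X" unfolding D1_def by simp
    then show ?thesis by blast
  qed
  have ne2: "D2 X \<noteq> {}" using D1_D2 ne1 by blast
  have d1: "d1 X u v = Sup (I1 ` D1 X)" unfolding d1_def I1_def by simp
  have d2: "d2 X u v = Sup (I2 ` D2 X)" unfolding d2_def I2_def by simp
  have d2e: "d2eps X e u v = Sup (I2 ` D2eps X e)" for e unfolding d2eps_def I2_def by simp
  have A: "d1 X u v \<le> d2 X u v"
    unfolding d1 d2
  proof (rule cSUP_least[OF ne1])
    fix f assume "f \<in> D1 X"
    then show "I1 f \<le> Sup (I2 ` D2 X)"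
      using I12 D1_D2 by (metis cSUP_upper bdd2)
  qed
  have B: "d2 X u v \<le> d1 X u v"
    unfolding d1 d2
  proof (rule cSUP_least[OF ne2])
    fix fg assume fgD: "fg \<in> D2 X"
    obtain f g where fgd: "fg = (f, g)" by (cases fg)
    have fg: "(f, g) \<in> D2 X" using fgD fgd by simp
    have cf: "continuous_on X f" and cg: "continuous_on X g" using fg unfolding D2_def by auto
    note P = Fh_props[OF fg]
    have PP: "g x \<le> - Fh X f x" if "x \<in> X" for x using P(3)[OF that] by linarith
    have cF: "continuous_on X (Fh X f)" using P(1) unfolding D1_def by auto
    have "integral\<^sup>L u f \<le> integral\<^sup>L u (Fh X f)"
      by (rule integral_mono) (use integ_Delta[OF cX uD cf] integ_Delta[OF cX uD cF] space_Delta[OF uD] P(2) in auto)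
    moreover have "integral\<^sup>L v g \<le> integral\<^sup>L v (\<lambda>x. - Fh X f x)"
      by (rule integral_mono) (use integ_Delta[OF cX vD cg] integ_Delta[OF cX vD cF] space_Delta[OF vD] PP in auto)
    ultimately have "I2 fg \<le> I1 (Fh X f)" unfolding I2_def I1_def fgd by simp
    also have "\<dots> \<le> Sup (I1 ` D1 X)" by (rule cSUP_upper[OF P(1) bdd1])
    finally show "I2 fg \<le> Sup (I1 ` D1 X)" .
  qed
  have C1: "d2 X u v \<le> d2eps X e u v" if "e > 0" for e
    unfolding d2 d2e
  proof (rule cSUP_least[OF ne2])
    fix fg assume "fg \<in> D2 X"
    then have "fg \<in> D2eps X e" using D2_D2eps[of e X] that by auto
    then show "I2 fg \<le> Sup (I2 ` D2eps X e)" by (rule cSUP_upper[OF _ bdd2e])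
  qed
  have C2: "d2eps X e u v \<le> d2 X u v + 2 * e" if "e > 0" for e
  proof -
    have "D2eps X e \<noteq> {}" using ne2 D2_D2eps[of e X] that by auto
    then show ?thesis
      unfolding d2 d2e
    proof (rule cSUP_least)
      fix fg assume fgD: "fg \<in> D2eps X e"
      obtain f g where fgd: "fg = (f, g)" by (cases fg)
      have fg: "(f, g) \<in> D2eps X e" using fgD fgd by simp
      have cf: "continuous_on X f" and cg: "continuous_on X g" using fg unfolding D2eps_def by auto
      have sh: "((\<lambda>x. f x - e), (\<lambda>x. g x - e)) \<in> D2 X" using D2eps_shift[OF fg] that by simp
      have "I2 ((\<lambda>x. f x - e), (\<lambda>x. g x - e)) = I2 fg - 2 * e"
        unfolding I2_def fgd using integ_Delta[OF cX uD cf] integ_Delta[OF cX vD cg]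
        by (simp add: U.prob_space V.prob_space)
      moreover have "I2 ((\<lambda>x. f x - e), (\<lambda>x. g x - e)) \<le> Sup (I2 ` D2 X)"
        by (rule cSUP_upper[OF sh bdd2])
      ultimately show "I2 fg \<le> Sup (I2 ` D2 X) + 2 * e" by simp
    qed
  qed
  have dp: "d2plus X u v = (INF e\<in>{0<..}. d2eps X e u v)" unfolding d2plus_def by simp
  have bddb: "bdd_below ((\<lambda>e. d2eps X e u v) ` {0<..})"
    using C1 by (auto simp: bdd_below_def)
  have C: "d2 X u v \<le> d2plus X u v"
    unfolding dp by (rule cINF_greatest) (auto intro: C1)
  have D: "d2plus X u v \<le> d2 X u v"
  proof (rule field_le_epsilon)
    fix e :: real assume e: "e > 0"
    have "d2plus X u v \<le> d2eps X (e/2) u v"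
      unfolding dp by (rule cINF_lower[OF bddb]) (use e in simp)
    also have "\<dots> \<le> d2 X u v + e" using C2[of "e/2"] e by simp
    finally show "d2plus X u v \<le> d2 X u v + e" .
  qed
  show ?thesis using A B C D by simp
qed

end
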